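(* Let $k\ge3$ be odd, let $G=(V,E)$ be a $k$-uniform power hypergraph, and let $\mathbf x\in\mathbb R^n$ be an H-eigenvector of its Laplacian tensor $\mathcal L$ corresponding to an H-eigenvalue $\lambda>1$. Let $e\in E$. (i) If $e$ has exactly one intersectional vertex $i$ and $x_s\neq0$ for some cored vertex $s\in e$, then $x_ix_s<0$. (ii) If $e$ has exactly two intersectional vertices $i$ and $j$ and $x_s\neq0$ for some cored vertex $s\in e$, then $x_ix_j<0$.
   Context: A $k$-uniform power hypergraph is the $k$-th power $H^k$ of a simple graph $H=(V_H,E_H)$: for each edge $e\in E_H$ add $k-2$ new distinct vertices $i_{e,1},\ldots,i_{e,k-2}$ (different for different edges and not in $V_H$), and take as edges the sets $e\cup\{i_{e,1},\ldots,i_{e,k-2}\}$, $e\in E_H$. For a $k$-uniform hypergraph with vertex set $[n]$, $d_i$ is the number of edges containing $i$; a vertex of degree one is a cored vertex and a vertex of degree larger than one is an intersectional vertex. The Laplacian tensor $\mathcal L=\mathcal D-\mathcal A$ ($\mathcal D$ diagonal with entries $d_i$, $\mathcal A$ with entries $\frac1{(k-1)!}$ at index tuples forming an edge and $0$ otherwise) satisfies $(\mathcal L\mathbf x^{k-1})_i=d_ix_i^{k-1}-\sum_{e\ni i}\prod_{s\in e\setminus\{i\}}x_s$. A real $\lambda$ is an H-eigenvalue with H-eigenvector $\mathbf x\neq0$ if $(\mathcal L\mathbf x^{k-1})_i=\lambda x_i^{k-1}$ for all $i$. *)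

theory Defs
  imports Complex_Main
begin

definition power_hypergraph :: "nat \<Rightarrow> nat \<Rightarrow> nat set set \<Rightarrow> bool" where
  "power_hypergraph n k E \<longleftrightarrow>
     (\<exists>VH EH f.
        VH \<subseteq> {1..n} \<and>
        EH \<subseteq> {e. e \<subseteq> VH \<and> card e = 2} \<and>
        (\<forall>e\<in>EH. f e \<subseteq> {1..n} - VH \<and> card (f e) = k - 2) \<and>
        (\<forall>e\<in>EH. \<forall>e'\<in>EH. e \<noteq> e' \<longrightarrow> f e \<inter> f e' = {}) \<and>
        {1..n} = VH \<union> \<Union>(f ` EH) \<and>
        E = (\<lambda>e. e \<union> f e) ` EH)"

definition degree :: "nat set set \<Rightarrow> nat \<Rightarrow> nat" where
  "degree E i = card {e\<in>E. i \<in> e}"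

definition cored :: "nat set set \<Rightarrow> nat \<Rightarrow> bool" where
  "cored E i \<longleftrightarrow> degree E i = 1"

definition intersectional :: "nat set set \<Rightarrow> nat \<Rightarrow> bool" where
  "intersectional E i \<longleftrightarrow> degree E i > 1"

text \<open>The i-th component of L x^(k-1) for the Laplacian tensor L = D - A.\<close>
definition lap_apply :: "nat set set \<Rightarrow> nat \<Rightarrow> (nat \<Rightarrow> real) \<Rightarrow> nat \<Rightarrow> real" where
  "lap_apply E k x i =
     real (degree E i) * x i ^ (k - 1) - (\<Sum>e\<in>{e\<in>E. i \<in> e}. \<Prod>s\<in>e - {i}. x s)"

definition lap_H_eigenpair :: "nat \<Rightarrow> nat \<Rightarrow> nat set set \<Rightarrow> real \<Rightarrow> (nat \<Rightarrow> real) \<Rightarrow> bool" where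
  "lap_H_eigenpair n k E lam x \<longleftrightarrow>
     (\<exists>i\<in>{1..n}. x i \<noteq> 0) \<and>
     (\<forall>i\<in>{1..n}. lap_apply E k x i = lam * x i ^ (k - 1))"

end

theory Submission
  imports Defs
begin

lemma ph_struct:
  assumes "power_hypergraph n k E" "k \<ge> 3"
  shows "finite E \<and> (\<forall>e\<in>E. finite e \<and> card e = k \<and> e \<subseteq> {1..n})"
proof -
  obtain VH EH f where H: "VH \<subseteq> {1..n}" "EH \<subseteq> {e. e \<subseteq> VH \<and> card e = 2}"
    "\<forall>e\<in>EH. f e \<subseteq> {1..n} - VH \<and> card (f e) = k - 2"
    "E = (\<lambda>e. e \<union> f e) ` EH"
    using assms(1) unfolding power_hypergraph_def by blast
  have sub: "\<forall>e\<in>E. e \<subseteq> {1..n}" using H by blast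
  have "\<forall>e\<in>E. finite e \<and> card e = k"
  proof
    fix e assume "e \<in> E"
    then obtain a where a: "a \<in> EH" "e = a \<union> f a" using H by blast
    have fa: "finite a" "card a = 2" using a H(2) card.infinite by fastforce+
    have ff: "finite (f a)" using a H(3) by (meson finite_subset finite_Diff finite_atLeastAtMost)
    have dj: "a \<inter> f a = {}" using a H(2,3) by blast
    have "card e = card a + card (f a)" using a fa ff dj card_Un_disjoint by metis
    also have "\<dots> = k" using a H(3) fa assms(2) by auto
    finally show "finite e \<and> card e = k" using a fa ff by auto
  qed
  moreover have "finite E" using sub by (meson Pow_iff finite_Pow_iff finite_atLeastAtMost finite_subset subsetI)
  ultimately show ?thesis using sub by blast
qed

theorem corollary4p1:
  fixes n k :: nat and E :: "nat set set" and lam :: real and x :: "nat \<Rightarrow> real" and e :: "nat set"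
  assumes "k \<ge> 3" and "odd k"
    and "power_hypergraph n k E"
    and "lap_H_eigenpair n k E lam x"
    and "lam > 1"
    and "e \<in> E"
  shows "(\<forall>i s. {v\<in>e. intersectional E v} = {i} \<and> s \<in> e \<and> cored E s \<and> x s \<noteq> 0
            \<longrightarrow> x i * x s < 0) \<and>
         (\<forall>i j s. {v\<in>e. intersectional E v} = {i, j} \<and> i \<noteq> j \<and> s \<in> e \<and> cored E s \<and> x s \<noteq> 0
            \<longrightarrow> x i * x j < 0)"
proof -
  have S: "finite E" "finite e" "card e = k" "e \<subseteq> {1..n}"
    using ph_struct[OF assms(3,1)] assms(6) by auto
  have eig: "\<forall>i\<in>{1..n}. lap_apply E k x i = lam * x i ^ (k - 1)"
    using assms(4) unfolding lap_H_eigenpair_def by blast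
  have noncored: "cored E v" if "v \<in> e" "\<not> intersectional E v" for v
  proof -
    have "e \<in> {e\<in>E. v \<in> e}" using that assms(6) by auto
    moreover have "finite {e\<in>E. v \<in> e}" using S(1) by auto
    ultimately have "degree E v \<ge> 1" unfolding degree_def
      by (metis One_nat_def Suc_leI card_gt_0_iff empty_iff)
    then show ?thesis using that(2) unfolding cored_def intersectional_def by auto
  qed
  have ceq: "(\<Prod>u\<in>e - {t}. x u) = (1 - lam) * x t ^ (k - 1)" if "t \<in> e" "cored E t" for t
  proof -
    have "card {e\<in>E. t \<in> e} = 1" using that(2) unfolding cored_def degree_def .
    then obtain e' where "{e\<in>E. t \<in> e} = {e'}" using card_1_singletonE by blast
    moreover have "e \<in> {e\<in>E. t \<in> e}" using that assms(6) by auto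
    ultimately have D: "{e\<in>E. t \<in> e} = {e}" by auto
    have "t \<in> {1..n}" using S(4) that by auto
    then have "lap_apply E k x t = lam * x t ^ (k - 1)" using eig by blast
    then have "x t ^ (k - 1) - (\<Prod>u\<in>e - {t}. x u) = lam * x t ^ (k - 1)"
      unfolding lap_apply_def D using that(2) unfolding cored_def by simp
    then show ?thesis by (simp add: algebra_simps)
  qed
  have kpow: "x t ^ k = x t * x t ^ (k - 1)" for t
  proof -
    have "k = Suc (k - 1)" using assms(1) by simp
    then show ?thesis by (metis power_Suc)
  qed
  have main: "(\<forall>u\<in>e. x u \<noteq> 0) \<and> (\<forall>t\<in>e. cored E t \<longrightarrow> x t = x s)"
    if s: "s \<in> e" "cored E s" "x s \<noteq> 0" for s
  proof -
    have "(1 - lam) * x s ^ (k - 1) \<noteq> 0" using assms(5) s(3) by simp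
    then have "(\<Prod>u\<in>e - {s}. x u) \<noteq> 0" using ceq s by simp
    then have nz: "\<forall>u\<in>e. x u \<noteq> 0" using S(2) s(3) by auto
    define P where "P = (\<Prod>u\<in>e. x u)"
    have kP: "(1 - lam) * x t ^ k = P" if "t \<in> e" "cored E t" for t
    proof -
      have "P = x t * (\<Prod>u\<in>e - {t}. x u)" unfolding P_def using S(2) that(1) prod.remove by metis
      then show ?thesis using ceq[OF that] kpow[of t] by (simp add: algebra_simps)
    qed
    have "\<forall>t\<in>e. cored E t \<longrightarrow> x t = x s"
    proof (intro ballI impI)
      fix t assume t: "t \<in> e" "cored E t"
      have "(1 - lam) * x t ^ k = (1 - lam) * x s ^ k" using kP[OF t] kP[OF s(1,2)] by simp
      then have "x t ^ k = x s ^ k" using assms(5) by simp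
      then show "x t = x s" using odd_real_root_unique[OF assms(2)] by metis
    qed
    then show ?thesis using nz by blast
  qed
  have c_int: "\<not> (cored E v \<and> intersectional E v)" for v
    unfolding cored_def intersectional_def by auto
  show ?thesis
  proof (intro conjI allI impI)
    fix i s assume h: "{v\<in>e. intersectional E v} = {i} \<and> s \<in> e \<and> cored E s \<and> x s \<noteq> 0"
    define c where "c = x s"
    have s: "s \<in> e" "cored E s" "x s \<noteq> 0" using h by auto
    have ie: "i \<in> e" "intersectional E i" using h by blast+
    have is': "i \<noteq> s" using ie s c_int by blast
    note M = main[OF s]
    have cc: "x u = c" if "u \<in> e - {i, s}" for u
    proof -
      have "\<not> intersectional E u" using that h by blast
      then show ?thesis using M noncored that c_def by blast
    qed
    have cardr: "card (e - {i, s}) = k - 2" using S(2,3) ie(1) s(1) is' by (simp add: card_Diff_subset)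
    have E1: "e - {s} = insert i (e - {i, s})" using ie(1) is' by auto
    have "(\<Prod>u\<in>e - {s}. x u) = x i * (\<Prod>u\<in>e - {i, s}. x u)"
      unfolding E1 by (rule prod.insert) (use S(2) in auto)
    also have "\<dots> = x i * c ^ (k - 2)" using cc cardr by simp
    finally have "x i * c ^ (k - 2) = (1 - lam) * c ^ (k - 1)" using ceq[OF s(1,2)] c_def by simp
    moreover have "c ^ (k - 1) = c * c ^ (k - 2)"
    proof -
      have "k - 1 = Suc (k - 2)" using assms(1) by simp
      then show ?thesis by (metis power_Suc)
    qed
    ultimately have "x i * c ^ (k - 2) = ((1 - lam) * c) * c ^ (k - 2)" by (simp add: algebra_simps)
    moreover have "c ^ (k - 2) \<noteq> 0" using s(3) c_def by simp
    ultimately have "x i = (1 - lam) * c" using mult_right_cancel by blast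
    then have "x i * x s = (1 - lam) * c^2" using c_def by (simp add: power2_eq_square)
    moreover have "(1 - lam) * c^2 < 0" using assms(5) s(3) c_def
      by (simp add: mult_neg_pos)
    ultimately show "x i * x s < 0" by simp
  next
    fix i j s assume h: "{v\<in>e. intersectional E v} = {i, j} \<and> i \<noteq> j \<and> s \<in> e \<and> cored E s \<and> x s \<noteq> 0"
    define c where "c = x s"
    have s: "s \<in> e" "cored E s" "x s \<noteq> 0" using h by auto
    have ie: "i \<in> e" "intersectional E i" "j \<in> e" "intersectional E j" "i \<noteq> j" using h by blast+
    have is': "i \<noteq> s" "j \<noteq> s" using ie s c_int by blast+
    note M = main[OF s]
    have cc: "x u = c" if "u \<in> e - {i, j, s}" for u
    proof -
      have "\<not> intersectional E u" using that h by blast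
      then show ?thesis using M noncored that c_def by blast
    qed
    have cardr: "card (e - {i, j, s}) = k - 3" using S(2,3) ie s(1) is' by (simp add: card_Diff_subset)
    have E1: "e - {s} = insert i (insert j (e - {i, j, s}))" using ie is' by auto
    have "(\<Prod>u\<in>e - {s}. x u) = x i * (\<Prod>u\<in>insert j (e - {i, j, s}). x u)"
      unfolding E1 by (rule prod.insert) (use S(2) ie(5) in auto)
    also have "\<dots> = x i * (x j * (\<Prod>u\<in>e - {i, j, s}. x u))"
      by (subst prod.insert) (use S(2) in auto)
    also have "\<dots> = x i * x j * c ^ (k - 3)" using cc cardr by simp
    finally have "x i * x j * c ^ (k - 3) = (1 - lam) * c ^ (k - 1)" using ceq[OF s(1,2)] c_def by simp
    moreover have "c ^ (k - 1) = c^2 * c ^ (k - 3)"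
    proof -
      have "k - 1 = 2 + (k - 3)" using assms(1) by simp
      then show ?thesis by (metis power_add)
    qed
    ultimately have "(x i * x j) * c ^ (k - 3) = ((1 - lam) * c^2) * c ^ (k - 3)" by (simp add: algebra_simps)
    moreover have "c ^ (k - 3) \<noteq> 0" using s(3) c_def by simp
    ultimately have "x i * x j = (1 - lam) * c^2" using mult_right_cancel by blast
    moreover have "(1 - lam) * c^2 < 0" using assms(5) s(3) c_def
      by (simp add: mult_neg_pos)
    ultimately show "x i * x j < 0" by simp
  qed
qed

end
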